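(* Let $\rho$ be a representation of $D^{2,2,2}$, let $\{i,j,k\}=\{1,2,3\}$, and let $n\ge1$. Then: 1. $\psi_i(a^{ij}_n)=\nu^0(y_iA^{kj}_n)$; 2. $\psi_j(a^{ij}_n)=\nu^0(y_jA^{kj}_n)$ for $n>1$, and $\psi_j(a^{ij}_1)=\nu^0(y_j(y_i+y_k)A^{kj}_1)$; 3. $\psi_k(y_ia^{ij}_n)=\nu^0(y_kA^{ji}_{n+1})$; 4. $\psi_i(A^{ij}_n)=\nu^0(y_i(y_j+y_k)a^{ik}_n)$; 5. $\psi_j(y_kA^{ij}_n)=\nu^0(y_j(x_k+y_i)a^{ik}_n)$; 6. $\psi_k(y_jA^{ij}_n)=\nu^0(y_ka^{ji}_{n+1})$.
   Context: $D^{2,2,2}$ is the modular lattice generated by $x_1,y_1,x_2,y_2,x_3,y_3$ subject only to $x_i\subseteq y_i$ ($i=1,2,3$), with a greatest element $I$ adjoined. Meet is written $ab$, join $a+b$. Atomic elements: for distinct $i,j$, let $k$ denote the third index. Define - $a^{ij}_0=I$ and $a^{ij}_n=x_i+y_ja^{jk}_{n-1}$ for $n\ge1$; - $A^{ij}_0=I$ and $A^{ij}_n=y_i+x_jA^{ki}_{n-1}$ for $n\ge1$. A representation $\rho$ of $D^{2,2,2}$ in a finite-dimensional vector space $X_0$ is a lattice morphism from $D^{2,2,2}$ to the subspace lattice of $X_0$, with $\rho(I)=X_0$. Write $X_i=\rho(x_i)\subseteq Y_i=\rho(y_i)$. Put $R=Y_1\oplus Y_2\oplus Y_3$ and $X^1_0=\{(\eta_1,\eta_2,\eta_3)\in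 R:\sum\eta_i=0\}$. Define subspaces of $R$: - $G_i$: triples with $i$-th coordinate in $Y_i$ and the others $0$; - $H_i$: triples with $i$-th coordinate in $X_i$ and the others $0$; - $G'_i$: triples with $i$-th coordinate in $X_i$; - $H'_i$: triples with $i$-th coordinate $0$. $\Phi^+\rho$ is the representation in $X^1_0$ with $\Phi^+\rho(y_i)=G'_i\cap X^1_0$, $\Phi^+\rho(x_i)=H'_i\cap X^1_0$, $\Phi^+\rho(I)=X^1_0$. Set $\nu^1(a)=\Phi^+\rho(a)\subseteq R$. $\nu^0$ is the representation in $R$ with $\nu^0(y_i)=X^1_0+G_i$, $\nu^0(x_i)=X^1_0+H_i$, $\nu^0(I)=R$. The joint map is $\psi_i(a)=X^1_0+G_i\cap(H'_i+\nu^1(a))$. *)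

theory Defs
  imports Complex_Main "HOL-Library.Product_Plus"
begin

(* Lattice terms over the generators x_1,y_1,x_2,y_2,x_3,y_3 and the adjoined top I.
   Indices are the natural numbers 1,2,3. *)
datatype lt = LX nat | LY nat | LTop | LMeet lt lt | LJoin lt lt

(* the third index k of distinct i,j in {1,2,3} *)
definition third :: "nat \<Rightarrow> nat \<Rightarrow> nat" where
  "third i j = 6 - i - j"

fun aa :: "nat \<Rightarrow> nat \<Rightarrow> nat \<Rightarrow> lt" where
  "aa i j 0 = LTop"
| "aa i j (Suc n) = LJoin (LX i) (LMeet (LY j) (aa j (third i j) n))"

fun AA :: "nat \<Rightarrow> nat \<Rightarrow> nat \<Rightarrow> lt" where
  "AA i j 0 = LTop"
| "AA i j (Suc n) = LJoin (LY i) (LMeet (LX j) (AA (third i j) i n))"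

definition ssum :: "'v::ab_group_add set \<Rightarrow> 'v set \<Rightarrow> 'v set" where
  "ssum A B = {a + b | a b. a \<in> A \<and> b \<in> B}"

fun lt_eval :: "(nat \<Rightarrow> 'v::ab_group_add set) \<Rightarrow> (nat \<Rightarrow> 'v set) \<Rightarrow> 'v set \<Rightarrow> lt \<Rightarrow> 'v set" where
  "lt_eval Xs Ys T (LX i) = Xs i"
| "lt_eval Xs Ys T (LY i) = Ys i"
| "lt_eval Xs Ys T LTop = T"
| "lt_eval Xs Ys T (LMeet a b) = lt_eval Xs Ys T a \<inter> lt_eval Xs Ys T b"
| "lt_eval Xs Ys T (LJoin a b) = ssum (lt_eval Xs Ys T a) (lt_eval Xs Ys T b)"

definition is_rep :: "('k::field \<Rightarrow> 'v::ab_group_add \<Rightarrow> 'v) \<Rightarrow> 'v set \<Rightarrow> (nat \<Rightarrow> 'v set) \<Rightarrow> (nat \<Rightarrow> 'v set) \<Rightarrow> bool" where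
  "is_rep scale X0 Xs Ys \<longleftrightarrow> vector_space scale \<and> module.subspace scale X0
     \<and> (\<exists>B. finite B \<and> B \<subseteq> X0 \<and> module.span scale B = X0)
     \<and> (\<forall>i\<in>{1,2,3}. module.subspace scale (Xs i) \<and> module.subspace scale (Ys i)
          \<and> Xs i \<subseteq> Ys i \<and> Ys i \<subseteq> X0)"

definition coord :: "nat \<Rightarrow> 'v \<times> 'v \<times> 'v \<Rightarrow> 'v" where
  "coord i t = (if i = 1 then fst t else if i = 2 then fst (snd t) else snd (snd t))"

definition RR :: "(nat \<Rightarrow> 'v set) \<Rightarrow> ('v \<times> 'v \<times> 'v) set" where
  "RR Ys = {t. \<forall>i\<in>{1,2,3}. coord i t \<in> Ys i}"

definition X10 :: "(nat \<Rightarrow> 'v::ab_group_add set) \<Rightarrow> ('v \<times> 'v \<times> 'v) set" where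
  "X10 Ys = {t \<in> RR Ys. coord 1 t + coord 2 t + coord 3 t = 0}"

definition GG :: "(nat \<Rightarrow> 'v::ab_group_add set) \<Rightarrow> nat \<Rightarrow> ('v \<times> 'v \<times> 'v) set" where
  "GG Ys i = {t \<in> RR Ys. coord i t \<in> Ys i \<and> (\<forall>l\<in>{1,2,3}. l \<noteq> i \<longrightarrow> coord l t = 0)}"

definition HH :: "(nat \<Rightarrow> 'v::ab_group_add set) \<Rightarrow> (nat \<Rightarrow> 'v set) \<Rightarrow> nat \<Rightarrow> ('v \<times> 'v \<times> 'v) set" where
  "HH Xs Ys i = {t \<in> RR Ys. coord i t \<in> Xs i \<and> (\<forall>l\<in>{1,2,3}. l \<noteq> i \<longrightarrow> coord l t = 0)}"

definition GG' :: "(nat \<Rightarrow> 'v set) \<Rightarrow> (nat \<Rightarrow> 'v set) \<Rightarrow> nat \<Rightarrow> ('v \<times> 'v \<times> 'v) set" where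
  "GG' Xs Ys i = {t \<in> RR Ys. coord i t \<in> Xs i}"

definition HH' :: "(nat \<Rightarrow> 'v::zero set) \<Rightarrow> nat \<Rightarrow> ('v \<times> 'v \<times> 'v) set" where
  "HH' Ys i = {t \<in> RR Ys. coord i t = 0}"

(* nu^1(a) = Phi^+ rho (a), as a subspace of R *)
definition nu1 :: "(nat \<Rightarrow> 'v::ab_group_add set) \<Rightarrow> (nat \<Rightarrow> 'v set) \<Rightarrow> lt \<Rightarrow> ('v \<times> 'v \<times> 'v) set" where
  "nu1 Xs Ys a = lt_eval (\<lambda>i. HH' Ys i \<inter> X10 Ys) (\<lambda>i. GG' Xs Ys i \<inter> X10 Ys) (X10 Ys) a"

definition nu0 :: "(nat \<Rightarrow> 'v::ab_group_add set) \<Rightarrow> (nat \<Rightarrow> 'v set) \<Rightarrow> lt \<Rightarrow> ('v \<times> 'v \<times> 'v) set" where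
  "nu0 Xs Ys a = lt_eval (\<lambda>i. ssum (X10 Ys) (HH Xs Ys i)) (\<lambda>i. ssum (X10 Ys) (GG Ys i)) (RR Ys) a"

definition psi :: "(nat \<Rightarrow> 'v::ab_group_add set) \<Rightarrow> (nat \<Rightarrow> 'v set) \<Rightarrow> nat \<Rightarrow> lt \<Rightarrow> ('v \<times> 'v \<times> 'v) set" where
  "psi Xs Ys i a = ssum (X10 Ys) (GG Ys i \<inter> ssum (HH' Ys i) (nu1 Xs Ys a))"

end

theory Submission
  imports Defs
begin



definition sg :: "'v::ab_group_add set \<Rightarrow> bool" where
  "sg U \<longleftrightarrow> 0 \<in> U \<and> (\<forall>a\<in>U. \<forall>b\<in>U. a + b \<in> U) \<and> (\<forall>a\<in>U. - a \<in> U)"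

lemma sg0: "sg U \<Longrightarrow> 0 \<in> U" by (simp add: sg_def)
lemma sgadd: "sg U \<Longrightarrow> a \<in> U \<Longrightarrow> b \<in> U \<Longrightarrow> a + b \<in> U" by (simp add: sg_def)
lemma sgneg: "sg U \<Longrightarrow> a \<in> U \<Longrightarrow> - a \<in> U" by (simp add: sg_def)
lemma sgdiff: "sg U \<Longrightarrow> a \<in> U \<Longrightarrow> b \<in> U \<Longrightarrow> a - b \<in> U"
  using sgadd[of U a "- b"] sgneg[of U b] by simp

lemma sg_int: "sg A \<Longrightarrow> sg B \<Longrightarrow> sg (A \<inter> B)" by (simp add: sg_def)
lemma sg_ssum: assumes A: "sg A" and B: "sg B" shows "sg (ssum A B)"
  unfolding sg_def
proof (intro conjI ballI)
  have "(0::'a) = 0 + 0" by simp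
  thus "0 \<in> ssum A B" unfolding ssum_def using sg0[OF A] sg0[OF B] by blast
next
  fix x y assume "x \<in> ssum A B" "y \<in> ssum A B"
  then obtain a b c d where h: "a \<in> A" "b \<in> B" "x = a + b" "c \<in> A" "d \<in> B" "y = c + d"
    unfolding ssum_def by blast
  hence "x + y = (a + c) + (b + d)" by (simp add: algebra_simps)
  moreover have "a + c \<in> A" "b + d \<in> B" using h sgadd A B by blast+
  ultimately show "x + y \<in> ssum A B" unfolding ssum_def by blast
next
  fix x assume "x \<in> ssum A B"
  then obtain a b where h: "a \<in> A" "b \<in> B" "x = a + b" unfolding ssum_def by blast
  hence "- x = (- a) + (- b)" by (simp add: algebra_simps)
  moreover have "- a \<in> A" "- b \<in> B" using h sgneg A B by blast+
  ultimately show "- x \<in> ssum A B" unfolding ssum_def by blast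
qed

lemma ssum_sub: "ssum A B \<subseteq> ssum B A"
proof
  fix x assume "x \<in> ssum A B"
  then obtain a b where ab: "a \<in> A" "b \<in> B" "x = a + b" unfolding ssum_def by blast
  hence "x = b + a" by (simp add: add.commute)
  thus "x \<in> ssum B A" using ab unfolding ssum_def by blast
qed

lemma ssum_commute: "ssum A B = ssum B A"
  using ssum_sub by blast

lemma ssum_mono: "A \<subseteq> A' \<Longrightarrow> B \<subseteq> B' \<Longrightarrow> ssum A B \<subseteq> ssum A' B'"
  unfolding ssum_def by blast

lemma ssumI: "a \<in> A \<Longrightarrow> b \<in> B \<Longrightarrow> a + b \<in> ssum A B"
  unfolding ssum_def by blast

lemma modular: assumes "sg Z" "B \<subseteq> Z" shows "ssum (A \<inter> Z) B = ssum A B \<inter> Z"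
proof
  show "ssum (A \<inter> Z) B \<subseteq> ssum A B \<inter> Z"
  proof
    fix x assume "x \<in> ssum (A \<inter> Z) B"
    then obtain a b where h: "a \<in> A" "a \<in> Z" "b \<in> B" "x = a + b" unfolding ssum_def by blast
    hence "x \<in> Z" using assms sgadd by blast
    thus "x \<in> ssum A B \<inter> Z" using h ssumI by blast
  qed
  show "ssum A B \<inter> Z \<subseteq> ssum (A \<inter> Z) B"
  proof
    fix z assume "z \<in> ssum A B \<inter> Z"
    then obtain a b where ab: "a \<in> A" "b \<in> B" "z = a + b" "z \<in> Z" unfolding ssum_def by blast
    have "a = z - b" using ab by simp
    hence "a \<in> Z" using ab assms sgdiff by blast
    thus "z \<in> ssum (A \<inter> Z) B" using ab unfolding ssum_def by blast
  qed
qed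

definition perm3 :: "nat \<Rightarrow> nat \<Rightarrow> nat \<Rightarrow> bool" where
  "perm3 a b l \<longleftrightarrow> {a, b, l} = {1, 2, 3}"

lemma perm3_cases: "perm3 a b l \<longleftrightarrow>
  (a=1\<and>b=2\<and>l=3) \<or> (a=1\<and>b=3\<and>l=2) \<or> (a=2\<and>b=1\<and>l=3) \<or> (a=2\<and>b=3\<and>l=1) \<or> (a=3\<and>b=1\<and>l=2) \<or> (a=3\<and>b=2\<and>l=1)"
  unfolding perm3_def
  apply (rule iffI)
   apply (smt (verit, best) insertCI insertE empty_iff numeral_eq_iff semiring_norm(83) semiring_norm(86) semiring_norm(89) One_nat_def numeral_One one_eq_numeral_iff)
  by auto

lemma perm3_swap12: "perm3 a b l \<Longrightarrow> perm3 b a l" unfolding perm3_def by (simp add: insert_commute)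
lemma perm3_rot: "perm3 a b l \<Longrightarrow> perm3 b l a" unfolding perm3_def by (simp add: insert_commute)
lemma perm3_swap23: "perm3 a b l \<Longrightarrow> perm3 a l b" unfolding perm3_def by (simp add: insert_commute)
lemma perm3_third: "perm3 a b l \<Longrightarrow> third a b = l" unfolding perm3_cases third_def by (elim disjE conjE; simp)
lemma perm3_in: "perm3 a b l \<Longrightarrow> a \<in> {1,2,3} \<and> b \<in> {1,2,3} \<and> l \<in> {1,2,3} \<and> a \<noteq> b \<and> a \<noteq> l \<and> b \<noteq> l"
  unfolding perm3_cases by (elim disjE conjE; simp)
lemma perm3_exists: assumes "a \<in> {1,2,3::nat}" shows "\<exists>b l. perm3 a b l"
proof -
  have "a = 1 \<or> a = 2 \<or> a = 3" using assms by simp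
  thus ?thesis
  proof (elim disjE)
    assume "a = 1" thus ?thesis by (intro exI[of _ 2] exI[of _ 3]) (simp add: perm3_cases)
  next
    assume "a = 2" thus ?thesis by (intro exI[of _ 1] exI[of _ 3]) (simp add: perm3_cases)
  next
    assume "a = 3" thus ?thesis by (intro exI[of _ 1] exI[of _ 2]) (simp add: perm3_cases)
  qed
qed
lemma perm3_other: "perm3 a b l \<Longrightarrow> m \<in> {1,2,3} \<Longrightarrow> m = a \<or> m = b \<or> m = l"
  unfolding perm3_def by blast

lemma coord_add[simp]: "coord i (s + t) = coord i s + coord i t" by (simp add: coord_def)
lemma coord_diff[simp]: "coord i (s - t) = coord i s - coord i t" by (simp add: coord_def)
lemma coord_minus[simp]: "coord i (- t) = - coord i t" by (simp add: coord_def)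
lemma coord_zero[simp]: "coord i 0 = 0" by (simp add: coord_def)

definition sig :: "'v::ab_group_add \<times> 'v \<times> 'v \<Rightarrow> 'v" where
  "sig t = coord 1 t + coord 2 t + coord 3 t"

lemma sig_add[simp]: "sig (s + t) = sig s + sig t" by (simp add: sig_def algebra_simps)
lemma sig_diff[simp]: "sig (s - t) = sig s - sig t" by (simp add: sig_def algebra_simps)
lemma sig_zero[simp]: "sig 0 = 0" by (simp add: sig_def)

lemma sig_perm: "perm3 a b l \<Longrightarrow> sig t = coord a t + coord b t + coord l t"
  unfolding perm3_cases sig_def by (elim disjE conjE; simp add: algebra_simps)

lemma RR_perm: "perm3 a b l \<Longrightarrow> t \<in> RR Ys \<longleftrightarrow> coord a t \<in> Ys a \<and> coord b t \<in> Ys b \<and> coord l t \<in> Ys l"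
  unfolding perm3_cases RR_def by (elim disjE conjE; simp; blast)

definition mk3 :: "nat \<Rightarrow> nat \<Rightarrow> nat \<Rightarrow> 'v \<Rightarrow> 'v \<Rightarrow> 'v \<Rightarrow> 'v \<times> 'v \<times> 'v" where
  "mk3 a b l x y z = (let f = (\<lambda>m. if m = a then x else if m = b then y else z) in (f 1, f 2, f 3))"

lemma mk3_coord: "perm3 a b l \<Longrightarrow> coord a (mk3 a b l x y z) = x \<and> coord b (mk3 a b l x y z) = y \<and> coord l (mk3 a b l x y z) = z"
  unfolding perm3_cases mk3_def coord_def Let_def by (elim disjE conjE; simp)

lemma X10_iff: "t \<in> X10 Ys \<longleftrightarrow> t \<in> RR Ys \<and> sig t = 0"
  by (simp add: X10_def sig_def)




locale trp =
  fixes Xs Ys :: "nat \<Rightarrow> 'v::ab_group_add set"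
  assumes sgX: "i \<in> {1,2,3} \<Longrightarrow> sg (Xs i)"
    and sgY: "i \<in> {1,2,3} \<Longrightarrow> sg (Ys i)"
    and XY: "i \<in> {1,2,3} \<Longrightarrow> Xs i \<subseteq> Ys i"
begin

lemma RR_add: assumes "s \<in> RR Ys" "t \<in> RR Ys" shows "s + t \<in> RR Ys"
  unfolding RR_def
proof (rule CollectI, rule ballI)
  fix i :: nat assume i: "i \<in> {1,2,3}"
  note h = assms[unfolded RR_def, THEN CollectD, THEN bspec, OF i]
  show "coord i (s + t) \<in> Ys i" using h sgadd[OF sgY[OF i]] by simp
qed
lemma RR_diff: assumes "s \<in> RR Ys" "t \<in> RR Ys" shows "s - t \<in> RR Ys"
  unfolding RR_def
proof (rule CollectI, rule ballI)
  fix i :: nat assume i: "i \<in> {1,2,3}"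
  note h = assms[unfolded RR_def, THEN CollectD, THEN bspec, OF i]
  show "coord i (s - t) \<in> Ys i" using h sgdiff[OF sgY[OF i]] by simp
qed
lemma RR_neg: assumes "t \<in> RR Ys" shows "- t \<in> RR Ys"
  unfolding RR_def
proof (rule CollectI, rule ballI)
  fix i :: nat assume i: "i \<in> {1,2,3}"
  note h = assms[unfolded RR_def, THEN CollectD, THEN bspec, OF i]
  show "coord i (- t) \<in> Ys i" using h sgneg[OF sgY[OF i]] by simp
qed
lemma RR_zero: "0 \<in> RR Ys"
  unfolding RR_def
proof (rule CollectI, rule ballI)
  fix i :: nat assume i: "i \<in> {1,2,3}"
  show "coord i 0 \<in> Ys i" using sg0[OF sgY[OF i]] by simp
qed

lemma X10_add: "s \<in> X10 Ys \<Longrightarrow> t \<in> X10 Ys \<Longrightarrow> s + t \<in> X10 Ys"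
  by (simp add: X10_iff RR_add)
lemma X10_diff: "s \<in> X10 Ys \<Longrightarrow> t \<in> X10 Ys \<Longrightarrow> s - t \<in> X10 Ys"
  by (simp add: X10_iff RR_diff)

definition SS where "SS = sig ` RR Ys"
definition EE where "EE = lt_eval Xs Ys SS"
definition CC where "CC a U = {t \<in> X10 Ys. coord a t \<in> U}"

lemma sgSS: "sg SS"
  unfolding sg_def
proof (intro conjI ballI)
  show "0 \<in> SS" unfolding SS_def using RR_zero sig_zero[symmetric] by (rule rev_image_eqI)
next
  fix a b assume "a \<in> SS" "b \<in> SS"
  then obtain r s where "r \<in> RR Ys" "s \<in> RR Ys" "a = sig r" "b = sig s" unfolding SS_def by blast
  hence eq: "a + b = sig (r + s)" by simp
  have rs: "r + s \<in> RR Ys" using RR_add \<open>r \<in> RR Ys\<close> \<open>s \<in> RR Ys\<close> by blast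
  show "a + b \<in> SS" unfolding SS_def using rs eq by (rule rev_image_eqI)
next
  fix a assume "a \<in> SS"
  then obtain r where "r \<in> RR Ys" "a = sig r" unfolding SS_def by blast
  moreover have "sig (- r) = - sig r" using sig_diff[of 0 r] by simp
  ultimately show "- a \<in> SS" unfolding SS_def using RR_neg by (intro rev_image_eqI[of "- r"]) simp_all
qed

lemma Ys_SS: "i \<in> {1,2,3} \<Longrightarrow> Ys i \<subseteq> SS"
proof
  fix y assume i: "i \<in> {1,2,3}" and y: "y \<in> Ys i"
  obtain b l where p: "perm3 i b l" using perm3_exists i by blast
  have in3: "b \<in> {1,2,3}" "l \<in> {1,2,3}" using perm3_in[OF p] by auto
  let ?t = "mk3 i b l y 0 0"
  note cc = mk3_coord[OF p, of y 0 0]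
  have c: "coord i ?t = y" "coord b ?t = 0" "coord l ?t = 0" using cc by blast+
  have tR: "?t \<in> RR Ys" unfolding RR_perm[OF p] c using y sg0[OF sgY[OF in3(1)]] sg0[OF sgY[OF in3(2)]] by simp
  have ts: "y = sig ?t" by (simp add: sig_perm[OF p] c)
  show "y \<in> SS" unfolding SS_def using tR ts by (rule rev_image_eqI)
qed

fun ok :: "lt \<Rightarrow> bool" where
  "ok (LX i) = (i \<in> {1,2,3})"
| "ok (LY i) = (i \<in> {1,2,3})"
| "ok LTop = True"
| "ok (LMeet a b) = (ok a \<and> ok b)"
| "ok (LJoin a b) = (ok a \<and> ok b)"

lemma EE_simps[simp]:
  "EE (LX i) = Xs i" "EE (LY i) = Ys i" "EE LTop = SS"
  "EE (LMeet a b) = EE a \<inter> EE b" "EE (LJoin a b) = ssum (EE a) (EE b)"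
  by (simp_all add: EE_def)

lemma EE_SS: "ok b \<Longrightarrow> EE b \<subseteq> SS \<and> sg (EE b)"
proof (induction b)
  case (LX x) thus ?case using XY Ys_SS sgX by (auto)
next
  case (LY x) thus ?case using Ys_SS sgY by auto
next
  case LTop thus ?case using sgSS by simp
next
  case (LMeet b1 b2) thus ?case by (auto intro: sg_int)
next
  case (LJoin b1 b2)
  hence "ssum (EE b1) (EE b2) \<subseteq> ssum SS SS" by (intro ssum_mono) auto
  moreover have "ssum SS SS \<subseteq> SS"
  proof
    fix x assume "x \<in> ssum SS SS"
    then obtain a b where "a \<in> SS" "b \<in> SS" "x = a + b" unfolding ssum_def by blast
    thus "x \<in> SS" using sgadd[OF sgSS] by simp
  qed
  ultimately show ?case using LJoin by (auto intro: sg_ssum)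
qed

lemma gen_lemma:
  assumes i: "i \<in> {1,2,3}" and P: "P \<subseteq> Ys i"
  shows "ssum (X10 Ys) {t \<in> RR Ys. coord i t \<in> P \<and> (\<forall>l\<in>{1,2,3}. l \<noteq> i \<longrightarrow> coord l t = 0)}
       = {t \<in> RR Ys. sig t \<in> P}"
proof -
  obtain b l where p: "perm3 i b l" using perm3_exists i by blast
  have in3: "b \<in> {1,2,3}" "l \<in> {1,2,3}" "b \<noteq> i" "l \<noteq> i" using perm3_in[OF p] by auto
  show ?thesis
  proof
    show "ssum (X10 Ys) {t \<in> RR Ys. coord i t \<in> P \<and> (\<forall>l\<in>{1,2,3}. l \<noteq> i \<longrightarrow> coord l t = 0)}
       \<subseteq> {t \<in> RR Ys. sig t \<in> P}"
    proof
      fix x assume "x \<in> ssum (X10 Ys) {t \<in> RR Ys. coord i t \<in> P \<and> (\<forall>l\<in>{1,2,3}. l \<noteq> i \<longrightarrow> coord l t = 0)}"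
      then obtain z g where zg: "z \<in> X10 Ys" "g \<in> RR Ys" "coord i g \<in> P"
        "\<forall>l\<in>{1,2,3}. l \<noteq> i \<longrightarrow> coord l g = 0" "x = z + g"
        unfolding ssum_def by blast
      have "coord b g = 0" "coord l g = 0" using zg(4) in3 by blast+
      hence "sig g = coord i g" using sig_perm[OF p, of g] by simp
      moreover have "sig z = 0" using zg(1) X10_iff by blast
      moreover have "z \<in> RR Ys" using zg(1) X10_iff by blast
      ultimately show "x \<in> {t \<in> RR Ys. sig t \<in> P}" using zg RR_add by simp
    qed
    show "{t \<in> RR Ys. sig t \<in> P} \<subseteq> ssum (X10 Ys) {t \<in> RR Ys. coord i t \<in> P \<and> (\<forall>l\<in>{1,2,3}. l \<noteq> i \<longrightarrow> coord l t = 0)}"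
    proof
      fix x assume x: "x \<in> {t \<in> RR Ys. sig t \<in> P}"
      let ?g = "mk3 i b l (sig x) 0 0"
      note cc = mk3_coord[OF p, of "sig x" 0 0]
      have c: "coord i ?g = sig x" "coord b ?g = 0" "coord l ?g = 0" using cc by blast+
      have gR: "?g \<in> RR Ys" unfolding RR_perm[OF p] c using x P sg0[OF sgY[OF in3(1)]] sg0[OF sgY[OF in3(2)]] by auto
      have g0: "\<forall>m\<in>{1,2,3}. m \<noteq> i \<longrightarrow> coord m ?g = 0" using perm3_other[OF p] c by auto
      have "sig ?g = coord i ?g + coord b ?g + coord l ?g" by (rule sig_perm[OF p])
      hence sg: "sig ?g = sig x" using c by simp
      have "x - ?g \<in> RR Ys" using RR_diff gR x by blast
      hence xg: "x - ?g \<in> X10 Ys" using sg by (simp add: X10_iff)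
      have gm: "?g \<in> {t \<in> RR Ys. coord i t \<in> P \<and> (\<forall>l\<in>{1,2,3}. l \<noteq> i \<longrightarrow> coord l t = 0)}"
        using gR g0 c x by simp
      show "x \<in> ssum (X10 Ys) {t \<in> RR Ys. coord i t \<in> P \<and> (\<forall>l\<in>{1,2,3}. l \<noteq> i \<longrightarrow> coord l t = 0)}"
        using ssumI[OF xg gm] by simp
    qed
  qed
qed

lemma join_lemma:
  assumes "A \<subseteq> SS" "B \<subseteq> SS"
  shows "ssum {t \<in> RR Ys. sig t \<in> A} {t \<in> RR Ys. sig t \<in> B} = {t \<in> RR Ys. sig t \<in> ssum A B}"
proof
  show "ssum {t \<in> RR Ys. sig t \<in> A} {t \<in> RR Ys. sig t \<in> B} \<subseteq> {t \<in> RR Ys. sig t \<in> ssum A B}"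
  proof
    fix x assume "x \<in> ssum {t \<in> RR Ys. sig t \<in> A} {t \<in> RR Ys. sig t \<in> B}"
    then obtain r s where "r \<in> RR Ys" "sig r \<in> A" "s \<in> RR Ys" "sig s \<in> B" "x = r + s"
      unfolding ssum_def by blast
    hence "x \<in> RR Ys" using RR_add by blast
    moreover have "sig x \<in> ssum A B" using \<open>x = r + s\<close> ssumI[OF \<open>sig r \<in> A\<close> \<open>sig s \<in> B\<close>] by simp
    ultimately show "x \<in> {t \<in> RR Ys. sig t \<in> ssum A B}" by blast
  qed
  show "{t \<in> RR Ys. sig t \<in> ssum A B} \<subseteq> ssum {t \<in> RR Ys. sig t \<in> A} {t \<in> RR Ys. sig t \<in> B}"
  proof
    fix x assume x: "x \<in> {t \<in> RR Ys. sig t \<in> ssum A B}"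
    then obtain a b where ab: "a \<in> A" "b \<in> B" "sig x = a + b" unfolding ssum_def by blast
    obtain r where r: "r \<in> RR Ys" "sig r = a" using ab assms unfolding SS_def by blast
    have "x - r \<in> RR Ys" using x r RR_diff by blast
    moreover have "sig (x - r) = b" using ab r by simp
    moreover have "x = r + (x - r)" by simp
    ultimately show "x \<in> ssum {t \<in> RR Ys. sig t \<in> A} {t \<in> RR Ys. sig t \<in> B}"
      unfolding ssum_def using r ab by blast
  qed
qed

lemma nu0_eq: "ok b \<Longrightarrow> nu0 Xs Ys b = {t \<in> RR Ys. sig t \<in> EE b}"
proof (induction b)
  case (LX i)
  hence "nu0 Xs Ys (LX i) = ssum (X10 Ys) (HH Xs Ys i)" by (simp add: nu0_def)
  also have "\<dots> = {t \<in> RR Ys. sig t \<in> Xs i}"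
    unfolding HH_def using gen_lemma[of i "Xs i"] XY LX by simp
  finally show ?case by simp
next
  case (LY i)
  hence "nu0 Xs Ys (LY i) = ssum (X10 Ys) (GG Ys i)" by (simp add: nu0_def)
  also have "\<dots> = {t \<in> RR Ys. sig t \<in> Ys i}"
    unfolding GG_def using gen_lemma[of i "Ys i"] LY by simp
  finally show ?case by simp
next
  case LTop thus ?case by (auto simp: nu0_def SS_def)
next
  case (LMeet b1 b2) thus ?case by (auto simp: nu0_def)
next
  case (LJoin b1 b2)
  have "nu0 Xs Ys (LJoin b1 b2) = ssum (nu0 Xs Ys b1) (nu0 Xs Ys b2)" by (simp add: nu0_def)
  thus ?case using LJoin join_lemma EE_SS by simp
qed

lemma nu1_simps[simp]:
  "nu1 Xs Ys (LX i) = CC i {0}" "nu1 Xs Ys (LY i) = CC i (Xs i)" "nu1 Xs Ys LTop = X10 Ys"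
  "nu1 Xs Ys (LMeet a b) = nu1 Xs Ys a \<inter> nu1 Xs Ys b"
  "nu1 Xs Ys (LJoin a b) = ssum (nu1 Xs Ys a) (nu1 Xs Ys b)"
  by (auto simp: nu1_def CC_def HH'_def GG'_def X10_def)

lemma psi_eq:
  assumes i: "i \<in> {1,2,3}" and M: "nu1 Xs Ys a \<subseteq> X10 Ys"
  shows "psi Xs Ys i a = {t \<in> RR Ys. sig t \<in> coord i ` nu1 Xs Ys a}"
proof -
  obtain b l where p: "perm3 i b l" using perm3_exists i by blast
  have in3: "b \<in> {1,2,3}" "l \<in> {1,2,3}" "b \<noteq> i" "l \<noteq> i" using perm3_in[OF p] by auto
  let ?M = "nu1 Xs Ys a"
  have MY: "coord i ` ?M \<subseteq> Ys i" using M i by (auto simp: X10_def RR_def)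
  have "GG Ys i \<inter> ssum (HH' Ys i) ?M = {t \<in> RR Ys. coord i t \<in> coord i ` ?M \<and> (\<forall>l\<in>{1,2,3}. l \<noteq> i \<longrightarrow> coord l t = 0)}"
  proof
    show "GG Ys i \<inter> ssum (HH' Ys i) ?M \<subseteq> {t \<in> RR Ys. coord i t \<in> coord i ` ?M \<and> (\<forall>l\<in>{1,2,3}. l \<noteq> i \<longrightarrow> coord l t = 0)}"
    proof
      fix g assume g: "g \<in> GG Ys i \<inter> ssum (HH' Ys i) ?M"
      then obtain h m where hm: "h \<in> HH' Ys i" "m \<in> ?M" "g = h + m" unfolding ssum_def by blast
      have "coord i g = coord i m" using hm by (simp add: HH'_def)
      thus "g \<in> {t \<in> RR Ys. coord i t \<in> coord i ` ?M \<and> (\<forall>l\<in>{1,2,3}. l \<noteq> i \<longrightarrow> coord l t = 0)}"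
        using g hm unfolding GG_def by auto
    qed
    show "{t \<in> RR Ys. coord i t \<in> coord i ` ?M \<and> (\<forall>l\<in>{1,2,3}. l \<noteq> i \<longrightarrow> coord l t = 0)} \<subseteq> GG Ys i \<inter> ssum (HH' Ys i) ?M"
    proof
      fix g assume g: "g \<in> {t \<in> RR Ys. coord i t \<in> coord i ` ?M \<and> (\<forall>l\<in>{1,2,3}. l \<noteq> i \<longrightarrow> coord l t = 0)}"
      then obtain m where m: "m \<in> ?M" "coord i g = coord i m" by auto
      have mR: "m \<in> RR Ys" using m M X10_iff by blast
      have "g - m \<in> HH' Ys i" using g m mR RR_diff unfolding HH'_def by auto
      moreover have "g = (g - m) + m" by simp
      ultimately have "g \<in> ssum (HH' Ys i) ?M" unfolding ssum_def using m by blast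
      moreover have "g \<in> GG Ys i" using g MY unfolding GG_def by auto
      ultimately show "g \<in> GG Ys i \<inter> ssum (HH' Ys i) ?M" by blast
    qed
  qed
  thus ?thesis unfolding psi_def using gen_lemma[OF i MY] by simp
qed

end



context trp begin

lemma CC_X10: "CC a U \<subseteq> X10 Ys" by (auto simp: CC_def)
lemma CC_int: "CC a A \<inter> CC a B = CC a (A \<inter> B)" by (auto simp: CC_def)
lemma X10_coord: "a \<in> {1,2,3} \<Longrightarrow> t \<in> X10 Ys \<Longrightarrow> coord a t \<in> Ys a"
  unfolding X10_def RR_def by blast
lemma CC_Y: assumes "a \<in> {1,2,3}" shows "CC a U = CC a (Ys a \<inter> U)"
  using X10_coord[OF assms] unfolding CC_def by blast
lemma CC_top: "a \<in> {1,2,3} \<Longrightarrow> CC a (Ys a) = X10 Ys"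
  using X10_coord unfolding CC_def by blast

lemma X10_perm: "perm3 a b l \<Longrightarrow> t \<in> X10 Ys \<longleftrightarrow>
   coord a t \<in> Ys a \<and> coord b t \<in> Ys b \<and> coord l t \<in> Ys l \<and> coord a t + coord b t + coord l t = 0"
  by (simp only: X10_iff RR_perm sig_perm conj_assoc)

lemma L1:
  assumes p: "perm3 a b l" and W: "sg W" "W \<subseteq> Ys b"
  shows "ssum (CC a {0}) (CC b W) = CC a (Ys a \<inter> ssum W (Ys l))"
proof -
  have in3: "a \<in> {1,2,3}" "b \<in> {1,2,3}" "l \<in> {1,2,3}" using perm3_in[OF p] by auto
  note sY = sgY[OF in3(1)] sgY[OF in3(2)] sgY[OF in3(3)]
  show ?thesis
  proof
    show "ssum (CC a {0}) (CC b W) \<subseteq> CC a (Ys a \<inter> ssum W (Ys l))"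
    proof
      fix x assume "x \<in> ssum (CC a {0}) (CC b W)"
      then obtain u v where uv: "u \<in> CC a {0}" "v \<in> CC b W" "x = u + v" unfolding ssum_def by blast
      have xX: "x \<in> X10 Ys" using uv X10_add CC_X10 by blast
      have v: "coord a v \<in> Ys a" "coord b v \<in> W" "coord l v \<in> Ys l" "coord a v + coord b v + coord l v = 0"
        using uv(2) X10_perm[OF p] unfolding CC_def by auto
      have "coord a v = (coord a v + coord b v + coord l v) + (- coord b v) + (- coord l v)" by (simp add: algebra_simps)
      hence "coord a v = (- coord b v) + (- coord l v)" using v(4) by simp
      moreover have "- coord b v \<in> W" using v(2) W(1) by (rule sgneg[rotated])
      moreover have "- coord l v \<in> Ys l" using v(3) sY(3) by (rule sgneg[rotated])
      ultimately have "coord a v \<in> ssum W (Ys l)" using ssumI[of "- coord b v" W "- coord l v" "Ys l"] by simp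
      moreover have "coord a x = coord a v" using uv unfolding CC_def by simp
      ultimately show "x \<in> CC a (Ys a \<inter> ssum W (Ys l))" using xX v unfolding CC_def by simp
    qed
    show "CC a (Ys a \<inter> ssum W (Ys l)) \<subseteq> ssum (CC a {0}) (CC b W)"
    proof
      fix x assume x: "x \<in> CC a (Ys a \<inter> ssum W (Ys l))"
      then obtain w y where wy: "w \<in> W" "y \<in> Ys l" "coord a x = w + y" unfolding CC_def ssum_def by blast
      have xX: "x \<in> X10 Ys" using x CC_X10 by blast
      hence xc: "coord a x \<in> Ys a" "coord b x \<in> Ys b" "coord l x \<in> Ys l" "coord a x + coord b x + coord l x = 0"
        using X10_perm[OF p] by auto
      let ?v = "mk3 a b l (coord a x) (- w) (- y)"
      note MK = mk3_coord[OF p, of "coord a x" "- w" "- y"]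
      have c: "coord a ?v = coord a x" "coord b ?v = - w" "coord l ?v = - y" using MK by blast+
      have s0: "coord a x + - w + - y = 0" using wy(3) by simp
      have "- w \<in> W" using wy(1) W(1) by (rule sgneg[rotated])
      hence "- w \<in> Ys b" using W(2) by blast
      moreover have "- y \<in> Ys l" using wy(2) sY(3) by (rule sgneg[rotated])
      ultimately have vX: "?v \<in> X10 Ys" unfolding X10_perm[OF p] c using xc(1) s0 by blast
      hence vC: "?v \<in> CC b W" unfolding CC_def using c \<open>- w \<in> W\<close> by auto
      have "x - ?v \<in> X10 Ys" using X10_diff[OF xX vX] .
      hence "x - ?v \<in> CC a {0}" unfolding CC_def using c by simp
      moreover have "x = (x - ?v) + ?v" by simp
      ultimately show "x \<in> ssum (CC a {0}) (CC b W)" using vC unfolding ssum_def by blast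
    qed
  qed
qed

lemma L2:
  assumes p: "perm3 a b l" and U: "sg U" "U \<subseteq> Ys l"
  shows "ssum (CC a (Xs a)) (CC b {0} \<inter> CC l U) = CC a (ssum (Xs a) (Ys a \<inter> U))"
proof -
  have in3: "a \<in> {1,2,3}" "b \<in> {1,2,3}" "l \<in> {1,2,3}" using perm3_in[OF p] by auto
  note sY = sgY[OF in3(1)] sgY[OF in3(2)] sgY[OF in3(3)]
  show ?thesis
  proof
    show "ssum (CC a (Xs a)) (CC b {0} \<inter> CC l U) \<subseteq> CC a (ssum (Xs a) (Ys a \<inter> U))"
    proof
      fix x assume "x \<in> ssum (CC a (Xs a)) (CC b {0} \<inter> CC l U)"
      then obtain v u where uv: "v \<in> CC a (Xs a)" "u \<in> CC b {0} \<inter> CC l U" "x = v + u" unfolding ssum_def by blast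
      have xX: "x \<in> X10 Ys" using uv X10_add CC_X10 by blast
      have u: "coord a u \<in> Ys a" "coord b u = 0" "coord l u \<in> U" "coord a u + coord b u + coord l u = 0"
        using uv(2) X10_perm[OF p] unfolding CC_def by auto
      have "coord a u = - coord l u" using u by (simp add: eq_neg_iff_add_eq_0)
      hence "coord a u \<in> U" using sgneg[OF U(1) u(3)] by simp
      moreover have "coord a v \<in> Xs a" using uv(1) unfolding CC_def by blast
      ultimately have "coord a v + coord a u \<in> ssum (Xs a) (Ys a \<inter> U)" using u(1) ssumI[of "coord a v" "Xs a" "coord a u" "Ys a \<inter> U"] by blast
      hence "coord a x \<in> ssum (Xs a) (Ys a \<inter> U)" using uv(3) by simp
      thus "x \<in> CC a (ssum (Xs a) (Ys a \<inter> U))" using xX unfolding CC_def by simp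
    qed
    show "CC a (ssum (Xs a) (Ys a \<inter> U)) \<subseteq> ssum (CC a (Xs a)) (CC b {0} \<inter> CC l U)"
    proof
      fix x assume x: "x \<in> CC a (ssum (Xs a) (Ys a \<inter> U))"
      then obtain q w where qw: "q \<in> Xs a" "w \<in> Ys a" "w \<in> U" "coord a x = q + w" unfolding CC_def ssum_def by blast
      have xX: "x \<in> X10 Ys" using x CC_X10 by blast
      let ?u = "mk3 a b l w 0 (- w)"
      note MK = mk3_coord[OF p, of w 0 "- w"]
      have c: "coord a ?u = w" "coord b ?u = 0" "coord l ?u = - w" using MK by blast+
      have "- w \<in> U" using sgneg[OF U(1) qw(3)] .
      hence uX: "?u \<in> X10 Ys" unfolding X10_perm[OF p] c
        using qw U sg0[OF sY(2)] \<open>- w \<in> U\<close> by auto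
      hence uC: "?u \<in> CC b {0} \<inter> CC l U" unfolding CC_def using c \<open>- w \<in> U\<close> by auto
      have "x - ?u \<in> X10 Ys" using X10_diff[OF xX uX] .
      hence "x - ?u \<in> CC a (Xs a)" unfolding CC_def using c qw by simp
      moreover have "x = (x - ?u) + ?u" by simp
      ultimately show "x \<in> ssum (CC a (Xs a)) (CC b {0} \<inter> CC l U)" using uC unfolding ssum_def by blast
    qed
  qed
qed

lemma L3:
  assumes p: "perm3 a b l" and A: "sg A" "A \<subseteq> Ys a" and B: "sg B" "B \<subseteq> Ys b" and L: "L \<subseteq> Ys l"
  shows "coord l ` (CC a A \<inter> CC b B \<inter> CC l L) = L \<inter> ssum A B"
proof
  show "coord l ` (CC a A \<inter> CC b B \<inter> CC l L) \<subseteq> L \<inter> ssum A B"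
  proof
    fix y assume "y \<in> coord l ` (CC a A \<inter> CC b B \<inter> CC l L)"
    then obtain t where t: "t \<in> CC a A \<inter> CC b B \<inter> CC l L" "y = coord l t" by blast
    have tc: "coord a t \<in> A" "coord b t \<in> B" "coord l t \<in> L" "coord a t + coord b t + coord l t = 0"
      using t(1) X10_perm[OF p] unfolding CC_def by auto
    have "coord l t = (coord a t + coord b t + coord l t) + (- coord a t) + (- coord b t)" by (simp add: algebra_simps)
    hence "coord l t = (- coord a t) + (- coord b t)" using tc(4) by simp
    moreover have "- coord a t \<in> A" using tc(1) A(1) by (rule sgneg[rotated])
    moreover have "- coord b t \<in> B" using tc(2) B(1) by (rule sgneg[rotated])
    ultimately show "y \<in> L \<inter> ssum A B" using t(2) tc(3) ssumI[of "- coord a t" A "- coord b t" B] by simp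
  qed
  show "L \<inter> ssum A B \<subseteq> coord l ` (CC a A \<inter> CC b B \<inter> CC l L)"
  proof
    fix y assume "y \<in> L \<inter> ssum A B"
    then obtain \<alpha> \<beta> where ab: "y \<in> L" "\<alpha> \<in> A" "\<beta> \<in> B" "y = \<alpha> + \<beta>" unfolding ssum_def by blast
    let ?t = "mk3 a b l (- \<alpha>) (- \<beta>) y"
    note MK = mk3_coord[OF p, of "- \<alpha>" "- \<beta>" y]
    have c: "coord a ?t = - \<alpha>" "coord b ?t = - \<beta>" "coord l ?t = y" using MK by blast+
    have na: "- \<alpha> \<in> A" "- \<beta> \<in> B" using sgneg[OF A(1) ab(2)] sgneg[OF B(1) ab(3)] by auto
    have "?t \<in> X10 Ys" unfolding X10_perm[OF p] c using na A B L ab by auto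
    hence "?t \<in> CC a A \<inter> CC b B \<inter> CC l L" unfolding CC_def using c na ab by auto
    thus "y \<in> coord l ` (CC a A \<inter> CC b B \<inter> CC l L)" using c by force
  qed
qed

lemma L3a:
  assumes p: "perm3 a b l" and A: "sg A" "A \<subseteq> Ys a" and B: "sg B" "B \<subseteq> Ys b"
  shows "coord l ` (CC a A \<inter> CC b B) = Ys l \<inter> ssum A B"
proof -
  have in3: "l \<in> {1,2,3}" using perm3_in[OF p] by auto
  have "CC a A \<inter> CC b B = CC a A \<inter> CC b B \<inter> CC l (Ys l)" using CC_top[OF in3] CC_X10 by blast
  thus ?thesis using L3[OF p A B order.refl] by simp
qed

lemma L3b:
  assumes p: "perm3 a b l" and A: "A \<subseteq> Ys a"
  shows "coord a ` (CC a A) = A \<inter> ssum (Ys b) (Ys l)"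
proof -
  have in3: "a \<in> {1,2,3}" "b \<in> {1,2,3}" "l \<in> {1,2,3}" using perm3_in[OF p] by auto
  have p': "perm3 b l a" using perm3_rot[OF p] .
  have "CC a A = CC b (Ys b) \<inter> CC l (Ys l) \<inter> CC a A" using CC_top in3 CC_X10 by blast
  thus ?thesis using L3[OF p' sgY[OF in3(2)] _ sgY[OF in3(3)] _ A] by simp
qed

end



lemma ssum_le: assumes "sg C" "A \<subseteq> C" "B \<subseteq> C" shows "ssum A B \<subseteq> C"
proof
  fix x assume "x \<in> ssum A B"
  then obtain a b where "a \<in> A" "b \<in> B" "x = a + b" unfolding ssum_def by blast
  thus "x \<in> C" using assms sgadd[of C a b] by blast
qed

lemma ssum_right: assumes "0 \<in> A" shows "B \<subseteq> ssum A B"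
proof
  fix x assume "x \<in> B"
  thus "x \<in> ssum A B" using ssumI[OF assms, of x B] by simp
qed

lemma ssum_left: assumes "0 \<in> B" shows "A \<subseteq> ssum A B"
proof
  fix x assume "x \<in> A"
  thus "x \<in> ssum A B" using ssumI[OF _ assms, of x A] by simp
qed

context trp begin

lemma ok_aa: "perm3 i j k \<Longrightarrow> ok (aa i j n)"
proof (induction n arbitrary: i j k)
  case 0 thus ?case by simp
next
  case (Suc n)
  have t: "third i j = k" using perm3_third[OF Suc.prems] .
  have "ok (aa j k n)" using Suc.IH[OF perm3_rot[OF Suc.prems]] .
  thus ?case using perm3_in[OF Suc.prems] t by simp
qed

lemma ok_AA: "perm3 i j k \<Longrightarrow> ok (AA i j n)"
proof (induction n arbitrary: i j k)
  case 0 thus ?case by simp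
next
  case (Suc n)
  have t: "third i j = k" using perm3_third[OF Suc.prems] .
  have "ok (AA k i n)" using Suc.IH[OF perm3_rot[OF perm3_rot[OF Suc.prems]]] .
  thus ?case using perm3_in[OF Suc.prems] t by simp
qed

lemma sgE: "ok b \<Longrightarrow> sg (EE b)" using EE_SS by blast

lemma CC_SS: "i \<in> {1,2,3} \<Longrightarrow> CC i (Ys i \<inter> SS) = X10 Ys"
proof -
  assume i: "i \<in> {1,2,3}"
  have "Ys i \<inter> SS = Ys i" using Ys_SS[OF i] by blast
  thus ?thesis using CC_top[OF i] by simp
qed

lemma N1: "perm3 i j k \<Longrightarrow> nu1 Xs Ys (aa i j n) = CC i (Ys i \<inter> EE (AA k j n))"
proof (induction n arbitrary: i j k)
  case 0 thus ?case using CC_SS perm3_in[OF 0] by simp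
next
  case (Suc n)
  note p = Suc.prems
  have in3: "i \<in> {1,2,3}" "j \<in> {1,2,3}" "k \<in> {1,2,3}" using perm3_in[OF p] by auto
  have t: "third i j = k" using perm3_third[OF p] .
  have t2: "third k j = i" using perm3_third[OF perm3_swap12[OF perm3_rot[OF p]]] .
  have IH: "nu1 Xs Ys (aa j k n) = CC j (Ys j \<inter> EE (AA i k n))" using Suc.IH[OF perm3_rot[OF p]] .
  let ?W = "Xs j \<inter> EE (AA i k n)"
  have okA: "ok (AA i k n)" using ok_AA[OF perm3_swap23[OF p]] .
  have sgW: "sg ?W" using sg_int[OF sgX[OF in3(2)] sgE[OF okA]] .
  have WY: "?W \<subseteq> Ys j" using XY[OF in3(2)] by blast
  have "Xs j \<inter> (Ys j \<inter> EE (AA i k n)) = ?W" using XY[OF in3(2)] by blast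
  hence "nu1 Xs Ys (aa i j (Suc n)) = ssum (CC i {0}) (CC j ?W)"
    using t IH by (simp add: CC_int)
  also have "\<dots> = CC i (Ys i \<inter> ssum ?W (Ys k))" using L1[OF p sgW WY] .
  also have "\<dots> = CC i (Ys i \<inter> EE (AA k j (Suc n)))" using t2 by (simp add: ssum_commute)
  finally show ?case .
qed

lemma N2: "perm3 i j k \<Longrightarrow> nu1 Xs Ys (AA i j n) = CC i (Ys i \<inter> EE (aa i k n))"
proof (induction n arbitrary: i j k)
  case 0 thus ?case using CC_SS perm3_in[OF 0] by simp
next
  case (Suc n)
  note p = Suc.prems
  have in3: "i \<in> {1,2,3}" "j \<in> {1,2,3}" "k \<in> {1,2,3}" using perm3_in[OF p] by auto
  have t: "third i j = k" using perm3_third[OF p] .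
  have t2: "third i k = j" using perm3_third[OF perm3_swap23[OF p]] .
  have IH: "nu1 Xs Ys (AA k i n) = CC k (Ys k \<inter> EE (aa k j n))"
    using Suc.IH[OF perm3_rot[OF perm3_rot[OF p]]] .
  let ?U = "Ys k \<inter> EE (aa k j n)"
  have oka: "ok (aa k j n)" using ok_aa[OF perm3_swap12[OF perm3_rot[OF p]]] .
  have sgU: "sg ?U" using sg_int[OF sgY[OF in3(3)] sgE[OF oka]] .
  have UY: "?U \<subseteq> Ys k" by blast
  have "nu1 Xs Ys (AA i j (Suc n)) = ssum (CC i (Xs i)) (CC j {0} \<inter> CC k ?U)"
    using t IH by simp
  also have "\<dots> = CC i (ssum (Xs i) (Ys i \<inter> ?U))" using L2[OF p sgU UY] .
  also have "ssum (Xs i) (Ys i \<inter> ?U) = Ys i \<inter> ssum (Xs i) ?U"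
    using modular[OF sgY[OF in3(1)] XY[OF in3(1)], of ?U] by (simp add: ssum_commute Int_commute)
  also have "Ys i \<inter> ssum (Xs i) ?U = Ys i \<inter> EE (aa i k (Suc n))" using t2 by simp
  finally show ?case .
qed

lemma E_AA_sup: assumes p: "perm3 i j k" and n: "n \<ge> 1" shows "Ys i \<subseteq> EE (AA i j n)"
proof -
  obtain m where m: "n = Suc m" using n by (cases n) auto
  have in3: "i \<in> {1,2,3}" "j \<in> {1,2,3}" "k \<in> {1,2,3}" using perm3_in[OF p] by auto
  have ok: "ok (AA (third i j) i m)" using ok_AA[OF perm3_rot[OF perm3_rot[OF p]]] perm3_third[OF p] by simp
  have z: "0 \<in> Xs j \<inter> EE (AA (third i j) i m)" using sg0[OF sgX[OF in3(2)]] sg0[OF sgE[OF ok]] by blast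
  have "EE (AA i j n) = ssum (Ys i) (Xs j \<inter> EE (AA (third i j) i m))" using m by simp
  thus ?thesis using ssum_left[OF z, of "Ys i"] by simp
qed

lemma E_AA_sub: assumes p: "perm3 i j k" and n: "n \<ge> 1" shows "EE (AA i j n) \<subseteq> ssum (Ys i) (Ys j)"
proof -
  obtain m where m: "n = Suc m" using n by (cases n) auto
  have in3: "i \<in> {1,2,3}" "j \<in> {1,2,3}" "k \<in> {1,2,3}" using perm3_in[OF p] by auto
  have "Xs j \<inter> EE (AA (third i j) i m) \<subseteq> Ys j" using XY[OF in3(2)] by blast
  thus ?thesis using m by (simp add: ssum_mono)
qed

lemma E_aa_X: "perm3 i j k \<Longrightarrow> Xs i \<subseteq> EE (aa i j n)"
proof (induction n arbitrary: i j k)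
  case 0 thus ?case using XY Ys_SS perm3_in[OF 0] by (simp, blast)
next
  case (Suc n)
  note p = Suc.prems
  have in3: "i \<in> {1,2,3}" "j \<in> {1,2,3}" "k \<in> {1,2,3}" using perm3_in[OF p] by auto
  have t: "third i j = k" using perm3_third[OF p] .
  have ok: "ok (aa j k n)" using ok_aa[OF perm3_rot[OF p]] .
  have z: "0 \<in> Ys j \<inter> EE (aa j k n)" using sg0[OF sgY[OF in3(2)]] sg0[OF sgE[OF ok]] by blast
  have "EE (aa i j (Suc n)) = ssum (Xs i) (Ys j \<inter> EE (aa j k n))" using t by simp
  thus ?case using ssum_left[OF z, of "Xs i"] by simp
qed

lemma X_in_aa: assumes p: "perm3 i j k" and n: "n \<ge> 1" shows "Xs k \<subseteq> EE (aa i k n)"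
proof -
  obtain m where m: "n = Suc m" using n by (cases n) auto
  have in3: "i \<in> {1,2,3}" "j \<in> {1,2,3}" "k \<in> {1,2,3}" using perm3_in[OF p] by auto
  have t: "third i k = j" using perm3_third[OF perm3_swap23[OF p]] .
  have "Xs k \<subseteq> Ys k \<inter> EE (aa k j m)"
    using XY[OF in3(3)] E_aa_X[OF perm3_swap12[OF perm3_rot[OF p]], of m] by blast
  moreover have "Ys k \<inter> EE (aa k j m) \<subseteq> ssum (Xs i) (Ys k \<inter> EE (aa k j m))"
    using ssum_right[OF sg0[OF sgX[OF in3(1)]]] .
  moreover have "EE (aa i k n) = ssum (Xs i) (Ys k \<inter> EE (aa k j m))" using m t by simp
  ultimately show ?thesis by blast
qed

lemma fin:
  assumes "i \<in> {1,2,3}" "nu1 Xs Ys a \<subseteq> X10 Ys" "ok b" "coord i ` nu1 Xs Ys a = EE b"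
  shows "psi Xs Ys i a = nu0 Xs Ys b"
  using psi_eq[OF assms(1,2)] nu0_eq[OF assms(3)] assms(4) by simp

end



theorem mainTheorem9:
  fixes scale :: "'k::field \<Rightarrow> 'v::ab_group_add \<Rightarrow> 'v"
    and X0 :: "'v set" and Xs Ys :: "nat \<Rightarrow> 'v set"
    and i j k n :: nat
  assumes rep: "is_rep scale X0 Xs Ys"
    and idx: "{i, j, k} = {1, 2, 3}"
    and n: "n \<ge> 1"
  shows
    "psi Xs Ys i (aa i j n) = nu0 Xs Ys (LMeet (LY i) (AA k j n))
   \<and> (n > 1 \<longrightarrow> psi Xs Ys j (aa i j n) = nu0 Xs Ys (LMeet (LY j) (AA k j n)))
   \<and> psi Xs Ys j (aa i j 1) = nu0 Xs Ys (LMeet (LMeet (LY j) (LJoin (LY i) (LY k))) (AA k j 1))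
   \<and> psi Xs Ys k (LMeet (LY i) (aa i j n)) = nu0 Xs Ys (LMeet (LY k) (AA j i (n + 1)))
   \<and> psi Xs Ys i (AA i j n) = nu0 Xs Ys (LMeet (LMeet (LY i) (LJoin (LY j) (LY k))) (aa i k n))
   \<and> psi Xs Ys j (LMeet (LY k) (AA i j n)) = nu0 Xs Ys (LMeet (LMeet (LY j) (LJoin (LX k) (LY i))) (aa i k n))
   \<and> psi Xs Ys k (LMeet (LY j) (AA i j n)) = nu0 Xs Ys (LMeet (LY k) (aa j i (n + 1)))"
proof -
  from rep have vs: "vector_space scale" and subs: "\<forall>i\<in>{1,2,3}. module.subspace scale (Xs i) \<and> module.subspace scale (Ys i)
          \<and> Xs i \<subseteq> Ys i \<and> Ys i \<subseteq> X0"
    unfolding is_rep_def by blast+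
  have m: "module scale" using vs module_iff_vector_space by blast
  have sub_sg: "sg U" if "module.subspace scale U" for U
    unfolding sg_def using module.subspace_0[OF m that] module.subspace_add[OF m that]
      module.subspace_neg[OF m that] by blast
  interpret trp Xs Ys
  proof
    fix i :: nat assume i: "i \<in> {1,2,3}"
    show "sg (Xs i)" using subs i sub_sg by blast
    show "sg (Ys i)" using subs i sub_sg by blast
    show "Xs i \<subseteq> Ys i" using subs i by blast
  qed
  have p: "perm3 i j k" using idx unfolding perm3_def .
  have in3: "i \<in> {1,2,3}" "j \<in> {1,2,3}" "k \<in> {1,2,3}" using perm3_in[OF p] by auto
  have p_ikj: "perm3 i k j" using perm3_swap23[OF p] .
  have p_jik: "perm3 j i k" using perm3_swap12[OF p] .
  have p_jki: "perm3 j k i" using perm3_rot[OF p] .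
  have p_kij: "perm3 k i j" using perm3_rot[OF p_jki] .
  have p_kji: "perm3 k j i" using perm3_swap12[OF p_jki] .
  have t_ji: "third j i = k" using perm3_third[OF p_jik] .
  have t_kj: "third k j = i" using perm3_third[OF p_kji] .
  have n1: "n + 1 = Suc n" by simp
  define Z where "Z = EE (AA k j n)"
  define Z' where "Z' = EE (aa i k n)"
  have okZ: "ok (AA k j n)" using ok_AA[OF p_kji] .
  have okZ': "ok (aa i k n)" using ok_aa[OF p_ikj] .
  have sgZ: "sg Z" unfolding Z_def using sgE[OF okZ] .
  have sgZ': "sg Z'" unfolding Z'_def using sgE[OF okZ'] .
  have N1': "nu1 Xs Ys (aa i j n) = CC i (Ys i \<inter> Z)" unfolding Z_def using N1[OF p] .
  have N2': "nu1 Xs Ys (AA i j n) = CC i (Ys i \<inter> Z')" unfolding Z'_def using N2[OF p] .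
  note sYi = sgY[OF in3(1)] and sYj = sgY[OF in3(2)] and sYk = sgY[OF in3(3)]
  note sXi = sgX[OF in3(1)] and sXj = sgX[OF in3(2)] and sXk = sgX[OF in3(3)]

  have c1: "psi Xs Ys i (aa i j n) = nu0 Xs Ys (LMeet (LY i) (AA k j n))"
  proof (rule fin)
    show "i \<in> {1,2,3}" by (rule in3(1))
    show "nu1 Xs Ys (aa i j n) \<subseteq> X10 Ys" using N1' CC_X10 by simp
    show "ok (LMeet (LY i) (AA k j n))" using in3 okZ by simp
    have "Z \<subseteq> ssum (Ys k) (Ys j)" unfolding Z_def using E_AA_sub[OF p_kji n] .
    hence "Z \<subseteq> ssum (Ys j) (Ys k)" by (simp add: ssum_commute)
    moreover have "coord i ` CC i (Ys i \<inter> Z) = (Ys i \<inter> Z) \<inter> ssum (Ys j) (Ys k)"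
      using L3b[OF p, of "Ys i \<inter> Z"] by blast
    ultimately show "coord i ` nu1 Xs Ys (aa i j n) = EE (LMeet (LY i) (AA k j n))"
      using N1' unfolding Z_def by auto
  qed

  have G2: "coord j ` nu1 Xs Ys (aa i j n') = Ys j \<inter> (ssum (Ys i) (Ys k) \<inter> EE (AA k j n'))"
    if n': "n' \<ge> 1" for n'
  proof -
    let ?Z = "EE (AA k j n')"
    let ?U = "Ys i \<inter> ?Z"
    have ok1: "ok (AA k j n')" using ok_AA[OF p_kji] .
    have sgU: "sg ?U" using sg_int[OF sYi sgE[OF ok1]] .
    have "CC i ?U = CC i ?U \<inter> CC k (Ys k)" using CC_top[OF in3(3)] CC_X10 by blast
    hence "coord j ` nu1 Xs Ys (aa i j n') = coord j ` (CC i ?U \<inter> CC k (Ys k))" using N1[OF p] by simp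
    also have "\<dots> = Ys j \<inter> ssum ?U (Ys k)" using L3a[OF p_ikj sgU _ sYk order.refl] by blast
    also have "ssum ?U (Ys k) = ssum (Ys i) (Ys k) \<inter> ?Z"
      using modular[OF sgE[OF ok1] E_AA_sup[OF p_kji n']] .
    finally show ?thesis .
  qed

  have c2: "n > 1 \<longrightarrow> psi Xs Ys j (aa i j n) = nu0 Xs Ys (LMeet (LY j) (AA k j n))"
  proof
    assume n2: "n > 1"
    then obtain m where m: "n = Suc m" "m \<ge> 1" by (cases n) auto
    show "psi Xs Ys j (aa i j n) = nu0 Xs Ys (LMeet (LY j) (AA k j n))"
    proof (rule fin)
      show "j \<in> {1,2,3}" by (rule in3(2))
      show "nu1 Xs Ys (aa i j n) \<subseteq> X10 Ys" using N1' CC_X10 by simp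
      show "ok (LMeet (LY j) (AA k j n))" using in3 okZ by simp
      have e: "Z = ssum (Ys k) (Xs j \<inter> EE (AA i k m))" unfolding Z_def using m t_kj by simp
      have sgS: "sg (ssum (Ys i) (Ys k))" using sg_ssum[OF sYi sYk] .
      have a1: "Ys k \<subseteq> ssum (Ys i) (Ys k)" using ssum_right[OF sg0[OF sYi]] .
      have a2: "Xs j \<inter> EE (AA i k m) \<subseteq> ssum (Ys i) (Ys k)" using E_AA_sub[OF p_ikj m(2)] by blast
      have "Z \<subseteq> ssum (Ys i) (Ys k)" unfolding e using ssum_le[OF sgS a1 a2] .
      thus "coord j ` nu1 Xs Ys (aa i j n) = EE (LMeet (LY j) (AA k j n))"
        using G2[OF n] unfolding Z_def by auto
    qed
  qed

  have c3: "psi Xs Ys j (aa i j 1) = nu0 Xs Ys (LMeet (LMeet (LY j) (LJoin (LY i) (LY k))) (AA k j 1))"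
  proof (rule fin)
    show "j \<in> {1,2,3}" by (rule in3(2))
    show "nu1 Xs Ys (aa i j 1) \<subseteq> X10 Ys" using N1[OF p, of 1] CC_X10 by simp
    show "ok (LMeet (LMeet (LY j) (LJoin (LY i) (LY k))) (AA k j 1))" using in3 ok_AA[OF p_kji, of 1] by simp
    show "coord j ` nu1 Xs Ys (aa i j 1) = EE (LMeet (LMeet (LY j) (LJoin (LY i) (LY k))) (AA k j 1))"
      using G2[of 1] by (simp only: EE_simps Int_assoc order.refl)
  qed

  have c4: "psi Xs Ys k (LMeet (LY i) (aa i j n)) = nu0 Xs Ys (LMeet (LY k) (AA j i (n + 1)))"
  proof (rule fin)
    show "k \<in> {1,2,3}" by (rule in3(3))
    show "nu1 Xs Ys (LMeet (LY i) (aa i j n)) \<subseteq> X10 Ys" using N1' CC_X10 by auto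
    show "ok (LMeet (LY k) (AA j i (n + 1)))" using in3 ok_AA[OF p_jik, of "n + 1"] by (simp del: AA.simps)
    let ?V = "Xs i \<inter> Z"
    have sgV: "sg ?V" using sg_int[OF sXi sgZ] .
    have VY: "?V \<subseteq> Ys i" using XY[OF in3(1)] by blast
    have "nu1 Xs Ys (LMeet (LY i) (aa i j n)) = CC i (Xs i \<inter> (Ys i \<inter> Z))" using N1' by (simp add: CC_int)
    also have "Xs i \<inter> (Ys i \<inter> Z) = ?V" using XY[OF in3(1)] by blast
    also have "CC i ?V = CC i ?V \<inter> CC j (Ys j)" using CC_top[OF in3(2)] CC_X10 by blast
    finally have "coord k ` nu1 Xs Ys (LMeet (LY i) (aa i j n)) = coord k ` (CC i ?V \<inter> CC j (Ys j))" by simp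
    also have "\<dots> = Ys k \<inter> ssum ?V (Ys j)" using L3a[OF p sgV VY sYj order.refl] .
    also have "\<dots> = EE (LMeet (LY k) (AA j i (n + 1)))" unfolding n1 using t_ji
      by (simp add: ssum_commute Z_def)
    finally show "coord k ` nu1 Xs Ys (LMeet (LY i) (aa i j n)) = EE (LMeet (LY k) (AA j i (n + 1)))" .
  qed

  have c5: "psi Xs Ys i (AA i j n) = nu0 Xs Ys (LMeet (LMeet (LY i) (LJoin (LY j) (LY k))) (aa i k n))"
  proof (rule fin)
    show "i \<in> {1,2,3}" by (rule in3(1))
    show "nu1 Xs Ys (AA i j n) \<subseteq> X10 Ys" using N2' CC_X10 by simp
    show "ok (LMeet (LMeet (LY i) (LJoin (LY j) (LY k))) (aa i k n))" using in3 okZ' by simp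
    have "coord i ` CC i (Ys i \<inter> Z') = (Ys i \<inter> Z') \<inter> ssum (Ys j) (Ys k)"
      using L3b[OF p, of "Ys i \<inter> Z'"] by blast
    thus "coord i ` nu1 Xs Ys (AA i j n) = EE (LMeet (LMeet (LY i) (LJoin (LY j) (LY k))) (aa i k n))"
      using N2' unfolding Z'_def by auto
  qed

  have c6: "psi Xs Ys j (LMeet (LY k) (AA i j n)) = nu0 Xs Ys (LMeet (LMeet (LY j) (LJoin (LX k) (LY i))) (aa i k n))"
  proof (rule fin)
    show "j \<in> {1,2,3}" by (rule in3(2))
    show "nu1 Xs Ys (LMeet (LY k) (AA i j n)) \<subseteq> X10 Ys" using N2' CC_X10 by auto
    show "ok (LMeet (LMeet (LY j) (LJoin (LX k) (LY i))) (aa i k n))" using in3 okZ' by simp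
    let ?V = "Ys i \<inter> Z'"
    have sgV: "sg ?V" using sg_int[OF sYi sgZ'] .
    have "coord j ` nu1 Xs Ys (LMeet (LY k) (AA i j n)) = coord j ` (CC k (Xs k) \<inter> CC i ?V)" using N2' by simp
    also have "\<dots> = Ys j \<inter> ssum (Xs k) ?V" using L3a[OF p_kij sXk XY[OF in3(3)] sgV] by blast
    also have "ssum (Xs k) ?V = ssum (Ys i) (Xs k) \<inter> Z'"
      using modular[OF sgZ' X_in_aa[OF p n, folded Z'_def], of "Ys i"] by (simp add: ssum_commute)
    finally show "coord j ` nu1 Xs Ys (LMeet (LY k) (AA i j n)) = EE (LMeet (LMeet (LY j) (LJoin (LX k) (LY i))) (aa i k n))"
      unfolding Z'_def by (simp add: ssum_commute Int_assoc)
  qed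

  have c7: "psi Xs Ys k (LMeet (LY j) (AA i j n)) = nu0 Xs Ys (LMeet (LY k) (aa j i (n + 1)))"
  proof (rule fin)
    show "k \<in> {1,2,3}" by (rule in3(3))
    show "nu1 Xs Ys (LMeet (LY j) (AA i j n)) \<subseteq> X10 Ys" using N2' CC_X10 by auto
    show "ok (LMeet (LY k) (aa j i (n + 1)))" using in3 ok_aa[OF p_jik, of "n + 1"] by (simp del: aa.simps)
    let ?V = "Ys i \<inter> Z'"
    have sgV: "sg ?V" using sg_int[OF sYi sgZ'] .
    have "coord k ` nu1 Xs Ys (LMeet (LY j) (AA i j n)) = coord k ` (CC j (Xs j) \<inter> CC i ?V)" using N2' by simp
    also have "\<dots> = Ys k \<inter> ssum (Xs j) ?V" using L3a[OF p_jik sXj XY[OF in3(2)] sgV] by blast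
    also have "\<dots> = EE (LMeet (LY k) (aa j i (n + 1)))" unfolding n1 Z'_def using t_ji by simp
    finally show "coord k ` nu1 Xs Ys (LMeet (LY j) (AA i j n)) = EE (LMeet (LY k) (aa j i (n + 1)))" .
  qed

  show ?thesis using c1 c2 c3 c4 c5 c6 c7 by blast
qed



end
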